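(* Every finitely generated infinite amenable group is extraterrestrial.
   Context: A finitely generated group is extraterrestrial if its Cayley graph $\mathrm{Cay}(\Gamma,S)$ with respect to some (equivalently any) finite symmetric generating set $S$ is extraterrestrial. A graph $G=(V,E)$ is extraterrestrial if for every $m\in\mathbb N$ there exists $k\in\mathbb N$ such that for every $r\in\mathbb N$ there exists an $(m,k,r)$-UFO: a triple $(U,F,O)$ of pairwise disjoint finite subsets of $V$ with $U\neq\emptyset$ such that $|U|\ge m|F|$, there is a bijection $\mu:U\to O$ with $d_G(u,\mu(u))\le k$ for all $u$, and every path (sequence of distinct vertices with consecutive ones adjacent) from a vertex of $U$ to a vertex of $O$ either contains a vertex of $F$ or has length at least $r$. *)

theory Defs
  imports "HOL-Algebra.Algebra"
begin

definition is_path :: "'v set \<Rightarrow> ('v \<Rightarrow> 'v \<Rightarrow> bool) \<Rightarrow> 'v list \<Rightarrow> bool" where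
  "is_path V E p \<longleftrightarrow> p \<noteq> [] \<and> distinct p \<and> set p \<subseteq> V \<and>
     (\<forall>i. Suc i < length p \<longrightarrow> E (p ! i) (p ! Suc i))"

definition dist_le :: "'v set \<Rightarrow> ('v \<Rightarrow> 'v \<Rightarrow> bool) \<Rightarrow> 'v \<Rightarrow> 'v \<Rightarrow> nat \<Rightarrow> bool" where
  "dist_le V E u v k \<longleftrightarrow>
     (\<exists>p. is_path V E p \<and> hd p = u \<and> last p = v \<and> length p - 1 \<le> k)"

definition is_UFO ::
  "'v set \<Rightarrow> ('v \<Rightarrow> 'v \<Rightarrow> bool) \<Rightarrow> nat \<Rightarrow> nat \<Rightarrow> nat \<Rightarrow> 'v set \<Rightarrow> 'v set \<Rightarrow> 'v set \<Rightarrow> bool" where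
  "is_UFO V E m k r U F Ob \<longleftrightarrow>
     U \<subseteq> V \<and> F \<subseteq> V \<and> Ob \<subseteq> V \<and> finite U \<and> finite F \<and> finite Ob \<and>
     U \<inter> F = {} \<and> U \<inter> Ob = {} \<and> F \<inter> Ob = {} \<and> U \<noteq> {} \<and>
     card U \<ge> m * card F \<and>
     (\<exists>\<mu>. bij_betw \<mu> U Ob \<and> (\<forall>u\<in>U. dist_le V E u (\<mu> u) k)) \<and>
     (\<forall>p. is_path V E p \<and> hd p \<in> U \<and> last p \<in> Ob \<longrightarrow>
          set p \<inter> F \<noteq> {} \<or> length p - 1 \<ge> r)"

definition extraterrestrial :: "'v set \<Rightarrow> ('v \<Rightarrow> 'v \<Rightarrow> bool) \<Rightarrow> bool" where
  "extraterrestrial V E \<longleftrightarrow>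
     (\<forall>m::nat. \<exists>k::nat. \<forall>r::nat. \<exists>U F Ob. is_UFO V E m k r U F Ob)"

text \<open>Cayley graph of G w.r.t. S: vertices the group elements, g adjacent to g s for s in S
  (loops omitted; they play no role for paths or distances).\<close>

definition cayley_adj :: "('a, 'b) monoid_scheme \<Rightarrow> 'a set \<Rightarrow> 'a \<Rightarrow> 'a \<Rightarrow> bool" where
  "cayley_adj G S x y \<longleftrightarrow> x \<in> carrier G \<and> y \<in> carrier G \<and> x \<noteq> y \<and>
     (\<exists>s\<in>S. y = x \<otimes>\<^bsub>G\<^esub> s)"

definition finite_symmetric_generating_set :: "('a, 'b) monoid_scheme \<Rightarrow> 'a set \<Rightarrow> bool" where
  "finite_symmetric_generating_set G S \<longleftrightarrow>
     finite S \<and> S \<subseteq> carrier G \<and> (\<forall>s\<in>S. inv\<^bsub>G\<^esub> s \<in> S) \<and> generate G S = carrier G"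

definition finitely_generated_group :: "('a, 'b) monoid_scheme \<Rightarrow> bool" where
  "finitely_generated_group G \<longleftrightarrow> group G \<and> (\<exists>S. finite S \<and> S \<subseteq> carrier G \<and> generate G S = carrier G)"

definition extraterrestrial_group :: "('a, 'b) monoid_scheme \<Rightarrow> bool" where
  "extraterrestrial_group G \<longleftrightarrow>
     (\<exists>S. finite_symmetric_generating_set G S \<and> extraterrestrial (carrier G) (cayley_adj G S))"

definition amenable_group :: "('a, 'b) monoid_scheme \<Rightarrow> bool" where
  "amenable_group G \<longleftrightarrow> group G \<and>
     (\<exists>\<mu> :: 'a set \<Rightarrow> real.
        \<mu> (carrier G) = 1 \<and>
        (\<forall>A. A \<subseteq> carrier G \<longrightarrow> \<mu> A \<ge> 0) \<and>
        (\<forall>A B. A \<subseteq> carrier G \<longrightarrow> B \<subseteq> carrier G \<longrightarrow> A \<inter> B = {} \<longrightarrow>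
               \<mu> (A \<union> B) = \<mu> A + \<mu> B) \<and>
        (\<forall>g A. g \<in> carrier G \<longrightarrow> A \<subseteq> carrier G \<longrightarrow> \<mu> (g <#\<^bsub>G\<^esub> A) = \<mu> A))"

end

theory Submission
  imports Defs
begin


definition hallc :: "'a set \<Rightarrow> ('a \<Rightarrow> 'b set) \<Rightarrow> bool" where
  "hallc D N \<longleftrightarrow> (\<forall>XS. XS \<subseteq> D \<longrightarrow> finite XS \<longrightarrow> card XS \<le> card (\<Union>(N ` XS)))"

lemma hallcD: "hallc D N \<Longrightarrow> XS \<subseteq> D \<Longrightarrow> finite XS \<Longrightarrow> card XS \<le> card (\<Union>(N ` XS))"
  unfolding hallc_def by blast

lemma tight_union:
  assumes fin: "\<And>x. x \<in> D \<Longrightarrow> finite (N x)" and h: "hallc D N"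
    and A: "A \<subseteq> D" "finite A" "card (\<Union>(N ` A)) = card A"
    and B: "B \<subseteq> D" "finite B" "card (\<Union>(N ` B)) = card B"
  shows "card (\<Union>(N ` (A \<union> B))) = card (A \<union> B)"
proof -
  have fA: "finite (\<Union>(N ` A))" using A fin by auto
  have fB: "finite (\<Union>(N ` B))" using B fin by auto
  have e1: "\<Union>(N ` (A \<union> B)) = \<Union>(N ` A) \<union> \<Union>(N ` B)" by auto
  have s2: "\<Union>(N ` (A \<inter> B)) \<subseteq> \<Union>(N ` A) \<inter> \<Union>(N ` B)" by auto
  have c1: "card (\<Union>(N ` A) \<union> \<Union>(N ` B)) + card (\<Union>(N ` A) \<inter> \<Union>(N ` B)) = card A + card B"
    using card_Un_Int[OF fA fB] A B by simp
  have c2: "card (\<Union>(N ` (A \<inter> B))) \<le> card (\<Union>(N ` A) \<inter> \<Union>(N ` B))"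
    using s2 fA by (intro card_mono) auto
  have h1: "card (A \<inter> B) \<le> card (\<Union>(N ` (A \<inter> B)))" using h A B unfolding hallc_def
    by (meson finite_Int le_infI1)
  have h2: "card (A \<union> B) \<le> card (\<Union>(N ` (A \<union> B)))"
  proof -
    have "A \<union> B \<subseteq> D" "finite (A \<union> B)" using A B by auto
    then show ?thesis using h unfolding hallc_def by blast
  qed
  have c3: "card (A \<union> B) + card (A \<inter> B) = card A + card B" using card_Un_Int[OF A(2) B(2)] by simp
  have "card (\<Union>(N ` A) \<union> \<Union>(N ` B)) = card (A \<union> B)" using c1 c2 h1 h2[unfolded e1] c3 by linarith
  then show ?thesis using e1 by simp
qed

lemma hall_step:
  assumes fin: "\<And>x. x \<in> D \<Longrightarrow> finite (N x)" and h: "hallc D N" and d: "d \<in> D"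
  shows "\<exists>y\<in>N d. hallc (D - {d}) (\<lambda>x. N x - {y})"
proof (rule ccontr)
  assume "\<not> ?thesis"
  then have bad: "\<forall>y\<in>N d. \<exists>XS. XS \<subseteq> D - {d} \<and> finite XS \<and> card (\<Union>x\<in>XS. N x - {y}) < card XS"
    unfolding hallc_def by (auto simp: not_le)
  then obtain XX where XX: "\<forall>y\<in>N d. XX y \<subseteq> D - {d} \<and> finite (XX y) \<and> card (\<Union>x\<in>XX y. N x - {y}) < card (XX y)"
    by metis
  have tight: "card (\<Union>(N ` XX y)) = card (XX y) \<and> y \<in> \<Union>(N ` XX y)" if y: "y \<in> N d" for y
  proof -
    have f: "finite (\<Union>(N ` XX y))" using XX y fin by auto
    have e: "(\<Union>x\<in>XX y. N x - {y}) = \<Union>(N ` XX y) - {y}" by auto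
    have hh: "card (XX y) \<le> card (\<Union>(N ` XX y))" using h XX y unfolding hallc_def by auto
    have "card (\<Union>(N ` XX y) - {y}) < card (XX y)" using XX y e by metis
    then have "y \<in> \<Union>(N ` XX y)" using hh by (metis Diff_empty Diff_insert0 leD)
    moreover have "card (\<Union>(N ` XX y) - {y}) = card (\<Union>(N ` XX y)) - 1" using f calculation by simp
    moreover have "0 < card (\<Union>(N ` XX y))" using f calculation(1) card_gt_0_iff by blast
    ultimately show ?thesis using hh \<open>card (\<Union>(N ` XX y) - {y}) < card (XX y)\<close>
      by linarith
  qed
  have finNd: "finite (N d)" using fin d by auto
  have gen: "finite Y \<Longrightarrow> Y \<subseteq> N d \<Longrightarrow> \<Union>(XX ` Y) \<subseteq> D - {d} \<and> finite (\<Union>(XX ` Y)) \<and> card (\<Union>(N ` \<Union>(XX ` Y))) = card (\<Union>(XX ` Y))" for Y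
  proof (induction Y rule: finite_induct)
    case empty
    then show ?case by simp
  next
    case (insert y Y)
    then have IH: "\<Union>(XX ` Y) \<subseteq> D - {d}" "finite (\<Union>(XX ` Y))" "card (\<Union>(N ` \<Union>(XX ` Y))) = card (\<Union>(XX ` Y))" by auto
    have y: "y \<in> N d" using insert by auto
    have "card (\<Union>(N ` (XX y \<union> \<Union>(XX ` Y)))) = card (XX y \<union> \<Union>(XX ` Y))"
      using tight_union[OF fin h, of "XX y" "\<Union>(XX ` Y)"] XX y tight[OF y] IH by auto
    moreover have "\<Union>(XX ` insert y Y) = XX y \<union> \<Union>(XX ` Y)" by auto
    ultimately show ?case using IH XX y by auto
  qed
  define XS where "XS = \<Union>(XX ` N d)"
  have XS: "XS \<subseteq> D - {d}" "finite XS" "card (\<Union>(N ` XS)) = card XS"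
    using gen[OF finNd] unfolding XS_def by auto
  have sub: "N d \<subseteq> \<Union>(N ` XS)" using tight unfolding XS_def by blast
  have nd: "d \<notin> XS" using XS by auto
  have "\<Union>(N ` insert d XS) = \<Union>(N ` XS)" using sub by auto
  moreover have "card (insert d XS) = Suc (card XS)" using XS nd by simp
  moreover have "card (insert d XS) \<le> card (\<Union>(N ` insert d XS))"
    using hallcD[OF h, of "insert d XS"] XS d by auto
  ultimately show False using XS by simp
qed

lemma chain_finite_Range:
  assumes C: "C \<in> chains A" "C \<noteq> {}" and Y: "finite Y" "Y \<subseteq> Range (\<Union>C)"
  shows "\<exists>R\<in>C. Y \<subseteq> Range R"
  using Y
proof (induction Y rule: finite_induct)
  case empty
  then show ?case using C by blast
next
  case (insert y Y)
  have "Y \<subseteq> Range (\<Union>C)" using insert.prems by blast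
  then obtain R where R: "R \<in> C" "Y \<subseteq> Range R" using insert.IH by blast
  have "y \<in> Range (\<Union>C)" using insert.prems by blast
  then obtain x R' where "(x, y) \<in> R'" "R' \<in> C" by blast
  then have R': "R' \<in> C" "y \<in> Range R'" by auto
  show ?case
  proof (cases "R \<subseteq> R'")
    case True then have "Range R \<subseteq> Range R'" by (rule Range_mono)
    then have "insert y Y \<subseteq> Range R'" using R(2) R'(2) insert_subset order_trans by metis
    then show ?thesis using R'(1) by (rule bexI)
  next
    case False then have "R' \<subseteq> R" using chainsD[OF C(1) R(1) R'(1)] by auto
    then have "Range R' \<subseteq> Range R" by (rule Range_mono)
    then have "insert y Y \<subseteq> Range R" using R(2) R'(2) insert_subset subsetD by metis
    then show ?thesis using R(1) by (rule bexI)
  qed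
qed

lemma hall_infinite:
  assumes fin: "\<And>x. x \<in> D \<Longrightarrow> finite (N x)" and h: "hallc D N"
  shows "\<exists>f. inj_on f D \<and> (\<forall>x\<in>D. f x \<in> N x)"
proof -
  define A where "A = {R. (\<forall>p\<in>R. fst p \<in> D \<and> snd p \<in> N (fst p)) \<and>
      (\<forall>p\<in>R. \<forall>q\<in>R. (fst p = fst q) = (snd p = snd q)) \<and>
      hallc (D - Domain R) (\<lambda>x. N x - Range R)}"
  have A1: "\<forall>p\<in>R. fst p \<in> D \<and> snd p \<in> N (fst p)" if "R \<in> A" for R using that unfolding A_def by simp
  have A2: "\<forall>p\<in>R. \<forall>q\<in>R. (fst p = fst q) = (snd p = snd q)" if "R \<in> A" for R using that unfolding A_def by simp
  have A3: "hallc (D - Domain R) (\<lambda>x. N x - Range R)" if "R \<in> A" for R using that unfolding A_def by simp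
  have AI: "R \<in> A" if "\<forall>p\<in>R. fst p \<in> D \<and> snd p \<in> N (fst p)" "\<forall>p\<in>R. \<forall>q\<in>R. (fst p = fst q) = (snd p = snd q)"
     "hallc (D - Domain R) (\<lambda>x. N x - Range R)" for R using that unfolding A_def by simp
  have "\<forall>C\<in>chains A. \<Union>C \<in> A"
  proof
    fix C assume C: "C \<in> chains A"
    then have CA: "C \<subseteq> A" by (rule chainsD2)
    show "\<Union>C \<in> A"
    proof (cases "C = {}")
      case True then show ?thesis using h by (intro AI) auto
    next
      case False
      have 1: "\<forall>p\<in>\<Union>C. fst p \<in> D \<and> snd p \<in> N (fst p)"
      proof
        fix p assume "p \<in> \<Union>C"
        then obtain R where "R \<in> C" "p \<in> R" by blast
        then show "fst p \<in> D \<and> snd p \<in> N (fst p)" using A1[of R] CA by blast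
      qed
      have 2: "\<forall>p\<in>\<Union>C. \<forall>q\<in>\<Union>C. (fst p = fst q) = (snd p = snd q)"
      proof (intro ballI)
        fix p q assume "p \<in> \<Union>C" "q \<in> \<Union>C"
        then obtain R1 R2 where R: "R1 \<in> C" "R2 \<in> C" "p \<in> R1" "q \<in> R2" by auto
        then have "R1 \<subseteq> R2 \<or> R2 \<subseteq> R1" using chainsD[OF C] by auto
        then obtain R where "R \<in> C" "p \<in> R" "q \<in> R" using R by auto
        then show "(fst p = fst q) = (snd p = snd q)" using A2[of R] CA by blast
      qed
      have 3: "hallc (D - Domain (\<Union>C)) (\<lambda>x. N x - Range (\<Union>C))"
        unfolding hallc_def
      proof (intro allI impI)
        fix XS assume XS: "XS \<subseteq> D - Domain (\<Union>C)" "finite XS"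
        define Y where "Y = \<Union>(N ` XS) \<inter> Range (\<Union>C)"
        have "finite (\<Union>(N ` XS))" using XS fin by (intro finite_UN_I) auto
        then have "finite Y" unfolding Y_def by simp
        then obtain R where R: "R \<in> C" "Y \<subseteq> Range R"
          using chain_finite_Range[OF C False] unfolding Y_def by blast
        have RA: "hallc (D - Domain R) (\<lambda>x. N x - Range R)" using R CA A3 by blast
        have "XS \<subseteq> D - Domain R" using XS R by blast
        then have "card XS \<le> card (\<Union>x\<in>XS. N x - Range R)" using hallcD[OF RA] XS by blast
        moreover have "(\<Union>x\<in>XS. N x - Range R) = (\<Union>x\<in>XS. N x - Range (\<Union>C))"
          using R unfolding Y_def by blast
        ultimately show "card XS \<le> card (\<Union>x\<in>XS. N x - Range (\<Union>C))" by simp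
      qed
      show ?thesis using 1 2 3 by (rule AI)
    qed
  qed
  then obtain M where M: "M \<in> A" and Mmax: "\<forall>XS\<in>A. M \<subseteq> XS \<longrightarrow> XS = M"
    using Zorn_Lemma by blast
  have M1: "\<forall>p\<in>M. fst p \<in> D \<and> snd p \<in> N (fst p)"
    and M2: "\<forall>p\<in>M. \<forall>q\<in>M. (fst p = fst q) = (snd p = snd q)"
    and M3: "hallc (D - Domain M) (\<lambda>x. N x - Range M)" using M A1 A2 A3 by auto
  have dom: "D \<subseteq> Domain M"
  proof
    fix d assume dD: "d \<in> D"
    show "d \<in> Domain M"
    proof (rule ccontr)
      assume nd: "d \<notin> Domain M"
      have fin': "\<And>x. x \<in> D - Domain M \<Longrightarrow> finite (N x - Range M)" using fin by auto
      obtain y where y: "y \<in> N d - Range M"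
        and hy: "hallc (D - Domain M - {d}) (\<lambda>x. N x - Range M - {y})"
        using hall_step[OF fin' M3, of d] dD nd by blast
      define M' where "M' = insert (d, y) M"
      have e1: "D - Domain M' = D - Domain M - {d}" unfolding M'_def by auto
      have e2: "(\<lambda>x. N x - Range M') = (\<lambda>x. N x - Range M - {y})" unfolding M'_def by auto
      have "M' \<in> A"
      proof (rule AI)
        show "\<forall>p\<in>M'. fst p \<in> D \<and> snd p \<in> N (fst p)" using M1 y dD unfolding M'_def by auto
        show "\<forall>p\<in>M'. \<forall>q\<in>M'. (fst p = fst q) = (snd p = snd q)"
        proof -
          have "\<forall>q\<in>M. fst q \<noteq> d \<and> snd q \<noteq> y" using nd y
            by (metis Diff_iff Domain.DomainI Range.RangeI prod.collapse)
          then show ?thesis using M2 unfolding M'_def by auto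
        qed
        show "hallc (D - Domain M') (\<lambda>x. N x - Range M')" using hy e1 e2 by simp
      qed
      moreover have "M \<subseteq> M'" "M' \<noteq> M" using nd unfolding M'_def by auto
      ultimately show False using Mmax by blast
    qed
  qed
  define f where "f x = (SOME y. (x, y) \<in> M)" for x
  have fM: "(x, f x) \<in> M" if "x \<in> D" for x
  proof -
    have "\<exists>y. (x, y) \<in> M" using dom that by blast
    then show ?thesis unfolding f_def by (rule someI_ex)
  qed
  have "inj_on f D"
  proof (rule inj_onI)
    fix x x' assume a: "x \<in> D" "x' \<in> D" "f x = f x'"
    have "(fst (x, f x) = fst (x', f x')) = (snd (x, f x) = snd (x', f x'))"
      using M2 fM[OF a(1)] fM[OF a(2)] by blast
    then show "x = x'" using a by simp
  qed
  moreover have "\<forall>x\<in>D. f x \<in> N x"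
  proof
    fix x assume "x \<in> D"
    then have "snd (x, f x) \<in> N (fst (x, f x))" using fM M1 by blast
    then show "f x \<in> N x" by simp
  qed
  ultimately show ?thesis by blast
qed



lemma nu_empty:
  fixes \<nu> :: "'a set \<Rightarrow> real"
  assumes add: "\<forall>A B. A \<subseteq> V \<longrightarrow> B \<subseteq> V \<longrightarrow> A \<inter> B = {} \<longrightarrow> \<nu> (A \<union> B) = \<nu> A + \<nu> B"
  shows "\<nu> {} = 0"
  using add[rule_format, of "{}" "{}"] by simp

lemma nu_finite_add:
  fixes \<nu> :: "'a set \<Rightarrow> real"
  assumes add: "\<forall>A B. A \<subseteq> V \<longrightarrow> B \<subseteq> V \<longrightarrow> A \<inter> B = {} \<longrightarrow> \<nu> (A \<union> B) = \<nu> A + \<nu> B"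
  shows "finite K \<Longrightarrow> \<forall>k\<in>K. F k \<subseteq> V \<Longrightarrow> \<forall>k\<in>K. \<forall>l\<in>K. k \<noteq> l \<longrightarrow> F k \<inter> F l = {} \<Longrightarrow>
     \<nu> (\<Union>k\<in>K. F k) = (\<Sum>k\<in>K. \<nu> (F k))"
proof (induction K rule: finite_induct)
  case empty
  then show ?case using nu_empty[OF add] by simp
next
  case (insert k K)
  have "\<forall>l\<in>K. F k \<inter> F l = {}" using insert.prems(2) insert.hyps(2) by (metis insertCI)
  then have d: "F k \<inter> (\<Union>l\<in>K. F l) = {}" by blast
  have "\<nu> (\<Union>l\<in>insert k K. F l) = \<nu> (F k \<union> (\<Union>l\<in>K. F l))" by simp
  also have "\<dots> = \<nu> (F k) + \<nu> (\<Union>l\<in>K. F l)"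
    using add[rule_format, of "F k" "\<Union>l\<in>K. F l"] d insert.prems by blast
  also have "\<dots> = \<nu> (F k) + (\<Sum>l\<in>K. \<nu> (F l))" using insert by simp
  finally show ?case using insert by simp
qed

lemma nu_mono:
  fixes \<nu> :: "'a set \<Rightarrow> real"
  assumes add: "\<forall>A B. A \<subseteq> V \<longrightarrow> B \<subseteq> V \<longrightarrow> A \<inter> B = {} \<longrightarrow> \<nu> (A \<union> B) = \<nu> A + \<nu> B"
    and pos: "\<forall>A. A \<subseteq> V \<longrightarrow> \<nu> A \<ge> 0"
    and "A \<subseteq> B" "B \<subseteq> V"
  shows "\<nu> A \<le> \<nu> B"
proof -
  have e: "\<nu> (A \<union> (B - A)) = \<nu> A + \<nu> (B - A)"
    using add[rule_format, of A "B - A"] assms by blast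
  have "A \<union> (B - A) = B" using assms by blast
  then have "\<nu> B = \<nu> A + \<nu> (B - A)" using e by simp
  moreover have "B - A \<subseteq> V" using assms by blast
  then have "\<nu> (B - A) \<ge> 0" using pos by blast
  ultimately show ?thesis by simp
qed

definition rbd :: "('a, 'b) monoid_scheme \<Rightarrow> 'a set \<Rightarrow> 'a set \<Rightarrow> 'a set" where
  "rbd G S B = {b \<otimes>\<^bsub>G\<^esub> s | b s. b \<in> B \<and> s \<in> S} - B"

lemma folner:
  fixes G :: "('a, 'b) monoid_scheme" and \<nu> :: "'a set \<Rightarrow> real"
  assumes grp: "group G" and S: "finite S" "S \<subseteq> carrier G"
    and n1: "\<nu> (carrier G) = 1" and pos: "\<forall>A. A \<subseteq> carrier G \<longrightarrow> \<nu> A \<ge> 0"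
    and add: "\<forall>A B. A \<subseteq> carrier G \<longrightarrow> B \<subseteq> carrier G \<longrightarrow> A \<inter> B = {} \<longrightarrow> \<nu> (A \<union> B) = \<nu> A + \<nu> B"
    and rinv: "\<forall>g A. g \<in> carrier G \<longrightarrow> A \<subseteq> carrier G \<longrightarrow> \<nu> (A #>\<^bsub>G\<^esub> g) = \<nu> A"
  shows "\<exists>B. finite B \<and> B \<noteq> {} \<and> B \<subseteq> carrier G \<and> m * card (rbd G S B) \<le> card B"
proof (rule ccontr)
  assume "\<not> ?thesis"
  then have exp: "card B < m * card (rbd G S B)" if "finite B" "B \<noteq> {}" "B \<subseteq> carrier G" for B
    using that by (meson not_le)
  interpret group G by (rule grp)
  define S' where "S' = insert \<one>\<^bsub>G\<^esub> S"
  have S'c: "S' \<subseteq> carrier G" "finite S'" using S unfolding S'_def by auto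
  define nb where "nb x = (\<lambda>s. x \<otimes>\<^bsub>G\<^esub> s) ` S'" for x
  have nbU: "\<Union>(nb ` P) = P \<union> rbd G S P" if "P \<subseteq> carrier G" for P
  proof
    show "\<Union>(nb ` P) \<subseteq> P \<union> rbd G S P" unfolding nb_def rbd_def S'_def using that by auto
    show "P \<union> rbd G S P \<subseteq> \<Union>(nb ` P)"
    proof
      fix x assume "x \<in> P \<union> rbd G S P"
      then consider "x \<in> P" | "x \<in> rbd G S P" by blast
      then show "x \<in> \<Union>(nb ` P)"
      proof cases
        case 1
        then have "x = x \<otimes>\<^bsub>G\<^esub> \<one>\<^bsub>G\<^esub>" using that by auto
        then show ?thesis using 1 unfolding nb_def S'_def by blast
      next
        case 2
        then show ?thesis unfolding nb_def S'_def rbd_def by blast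
      qed
    qed
  qed
  have rbd_fin: "finite (rbd G S P)" if "finite P" for P
  proof -
    have "{b \<otimes>\<^bsub>G\<^esub> s | b s. b \<in> P \<and> s \<in> S} = (\<lambda>(b, s). b \<otimes>\<^bsub>G\<^esub> s) ` (P \<times> S)" by auto
    then have "finite {b \<otimes>\<^bsub>G\<^esub> s | b s. b \<in> P \<and> s \<in> S}" using that S by simp
    then show ?thesis unfolding rbd_def by simp
  qed
  have grow: "Suc m * card P \<le> m * card (\<Union>(nb ` P))" if P: "finite P" "P \<subseteq> carrier G" for P
  proof -
    have "P \<inter> rbd G S P = {}" unfolding rbd_def by blast
    then have c: "card (\<Union>(nb ` P)) = card P + card (rbd G S P)"
      using nbU[OF P(2)] card_Un_disjoint[OF P(1) rbd_fin[OF P(1)]] by simp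
    show ?thesis
    proof (cases "P = {}")
      case True then show ?thesis by simp
    next
      case False
      then have "card P < m * card (rbd G S P)" using exp P by blast
      then show ?thesis using c by (simp add: algebra_simps)
    qed
  qed
  define D where "D = carrier G \<times> {..<Suc m}"
  define NN where "NN = (\<lambda>p::'a \<times> nat. nb (fst p) \<times> {..<m})"
  have finNN: "finite (NN p)" for p unfolding NN_def nb_def using S'c by simp
  have hall: "hallc D NN"
    unfolding hallc_def
  proof (intro allI impI)
    fix XS assume XS: "XS \<subseteq> D" "finite XS"
    define P where "P = fst ` XS"
    have P: "finite P" "P \<subseteq> carrier G" using XS unfolding D_def P_def by auto
    have "XS \<subseteq> P \<times> {..<Suc m}" using XS unfolding P_def D_def by force
    then have "card XS \<le> card (P \<times> {..<Suc m})" using P by (intro card_mono) auto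
    also have "\<dots> = Suc m * card P" by (simp add: card_cartesian_product)
    also have "\<dots> \<le> m * card (\<Union>(nb ` P))" using grow P by blast
    also have "\<dots> = card ((\<Union>(nb ` P)) \<times> {..<m})" by (simp add: card_cartesian_product)
    also have "(\<Union>(nb ` P)) \<times> {..<m} = \<Union>(NN ` XS)" unfolding NN_def P_def by auto
    finally show "card XS \<le> card (\<Union>(NN ` XS))" .
  qed
  obtain \<psi> where psi: "inj_on \<psi> D" "\<forall>p\<in>D. \<psi> p \<in> NN p"
    using hall_infinite[OF finNN hall] by blast
  define \<tau> where "\<tau> i x = (SOME t. t \<in> S' \<and> fst (\<psi> (x, i)) = x \<otimes>\<^bsub>G\<^esub> t)" for i x
  define jj where "jj i x = snd (\<psi> (x, i))" for i x
  have tau: "\<tau> i x \<in> S' \<and> fst (\<psi> (x, i)) = x \<otimes>\<^bsub>G\<^esub> \<tau> i x" "jj i x < m"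
    if "x \<in> carrier G" "i < Suc m" for x i
  proof -
    have "\<psi> (x, i) \<in> NN (x, i)" using psi that unfolding D_def by auto
    then have "fst (\<psi> (x, i)) \<in> nb x" "snd (\<psi> (x, i)) < m" unfolding NN_def by (auto simp: mem_Times_iff)
    then have ex: "\<exists>t. t \<in> S' \<and> fst (\<psi> (x, i)) = x \<otimes>\<^bsub>G\<^esub> t" and sm: "snd (\<psi> (x, i)) < m"
      unfolding nb_def by auto
    from someI_ex[OF ex] show "\<tau> i x \<in> S' \<and> fst (\<psi> (x, i)) = x \<otimes>\<^bsub>G\<^esub> \<tau> i x"
      unfolding \<tau>_def .
    show "jj i x < m" using sm unfolding jj_def .
  qed
  define AA where "AA i t j = {x \<in> carrier G. \<tau> i x = t \<and> jj i x = j}" for i t j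
  have AAc: "AA i t j \<subseteq> carrier G" for i t j unfolding AA_def by auto
  have w1: "(\<Sum>(t, j)\<in>S' \<times> {..<m}. \<nu> (AA i t j)) = 1" if i: "i < Suc m" for i
  proof -
    define F where "F = (\<lambda>(t, j). AA i t j)"
    have "(\<Union>k\<in>S' \<times> {..<m}. F k) = carrier G" using tau[OF _ i] unfolding AA_def F_def by auto
    moreover have "\<nu> (\<Union>k\<in>S' \<times> {..<m}. F k) = (\<Sum>k\<in>S' \<times> {..<m}. \<nu> (F k))"
      by (rule nu_finite_add[OF add]) (use S'c in \<open>auto simp: AA_def F_def\<close>)
    ultimately have "(\<Sum>k\<in>S' \<times> {..<m}. \<nu> (F k)) = 1" using n1 by simp
    then show ?thesis unfolding F_def by (simp add: case_prod_unfold)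
  qed
  have w2: "(\<Sum>(i, t)\<in>{..<Suc m} \<times> S'. \<nu> (AA i t j)) \<le> 1" if j: "j < m" for j
  proof -
    define F where "F = (\<lambda>(i, t). AA i t j #>\<^bsub>G\<^esub> t)"
    have Fc: "\<forall>k\<in>{..<Suc m} \<times> S'. F k \<subseteq> carrier G"
      using S'c unfolding F_def r_coset_def AA_def by auto
    have Fd: "\<forall>k\<in>{..<Suc m} \<times> S'. \<forall>l\<in>{..<Suc m} \<times> S'. k \<noteq> l \<longrightarrow> F k \<inter> F l = {}"
    proof (intro ballI impI)
      fix k l assume k: "k \<in> {..<Suc m} \<times> S'" and l: "l \<in> {..<Suc m} \<times> S'" and kl: "k \<noteq> l"
      obtain i t where kk: "k = (i, t)" by (cases k)
      obtain i' t' where ll: "l = (i', t')" by (cases l)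
      show "F k \<inter> F l = {}"
      proof (rule ccontr)
        assume "F k \<inter> F l \<noteq> {}"
        then obtain a a' where a: "a \<in> AA i t j" "a' \<in> AA i' t' j" "a \<otimes>\<^bsub>G\<^esub> t = a' \<otimes>\<^bsub>G\<^esub> t'"
          unfolding F_def kk ll r_coset_def by auto
        have ac: "a \<in> carrier G" "a' \<in> carrier G" using a AAc by auto
        have ii: "i < Suc m" "i' < Suc m" using k l kk ll by auto
        have "\<psi> (a, i) = (a \<otimes>\<^bsub>G\<^esub> t, j)"
          using tau[OF ac(1) ii(1)] a(1) unfolding AA_def jj_def by (auto intro: prod_eqI)
        moreover have "\<psi> (a', i') = (a' \<otimes>\<^bsub>G\<^esub> t', j)"
          using tau[OF ac(2) ii(2)] a(2) unfolding AA_def jj_def by (auto intro: prod_eqI)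
        ultimately have "\<psi> (a, i) = \<psi> (a', i')" using a(3) by simp
        then have "(a, i) = (a', i')" using psi(1) ac ii unfolding D_def by (auto dest: inj_onD)
        then have "t = t'" using a(1,2) unfolding AA_def by auto
        then show False using kl kk ll \<open>(a, i) = (a', i')\<close> by simp
      qed
    qed
    have "\<nu> (\<Union>k\<in>{..<Suc m} \<times> S'. F k) = (\<Sum>k\<in>{..<Suc m} \<times> S'. \<nu> (F k))"
      by (rule nu_finite_add[OF add]) (use S'c Fc Fd in auto)
    also have "\<dots> = (\<Sum>(i, t)\<in>{..<Suc m} \<times> S'. \<nu> (AA i t j))"
    proof (rule sum.cong)
      fix k assume "k \<in> {..<Suc m} \<times> S'"
      then show "\<nu> (F k) = (case k of (i, t) \<Rightarrow> \<nu> (AA i t j))"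
        using rinv AAc S'c unfolding F_def by (auto split: prod.splits)
    qed simp
    finally have e: "\<nu> (\<Union>k\<in>{..<Suc m} \<times> S'. F k) = (\<Sum>(i, t)\<in>{..<Suc m} \<times> S'. \<nu> (AA i t j))" .
    have "\<nu> (\<Union>k\<in>{..<Suc m} \<times> S'. F k) \<le> \<nu> (carrier G)"
      by (rule nu_mono[OF add pos]) (use Fc in auto)
    then show ?thesis using e n1 by simp
  qed
  have "(\<Sum>i<Suc m. \<Sum>(t, j)\<in>S' \<times> {..<m}. \<nu> (AA i t j)) = (\<Sum>i<Suc m. 1)"
    using w1 by (intro sum.cong) auto
  then have L: "(\<Sum>i<Suc m. \<Sum>(t, j)\<in>S' \<times> {..<m}. \<nu> (AA i t j)) = Suc m" by simp
  have "(\<Sum>i<Suc m. \<Sum>(t, j)\<in>S' \<times> {..<m}. \<nu> (AA i t j)) = (\<Sum>i<Suc m. \<Sum>t\<in>S'. \<Sum>j<m. \<nu> (AA i t j))"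
    by (simp add: sum.cartesian_product)
  also have "\<dots> = (\<Sum>i<Suc m. \<Sum>j<m. \<Sum>t\<in>S'. \<nu> (AA i t j))"
    by (intro sum.cong refl) (rule sum.swap)
  also have "\<dots> = (\<Sum>j<m. \<Sum>i<Suc m. \<Sum>t\<in>S'. \<nu> (AA i t j))"
    by (rule sum.swap)
  also have "\<dots> = (\<Sum>j<m. \<Sum>(i, t)\<in>{..<Suc m} \<times> S'. \<nu> (AA i t j))"
    by (simp add: sum.cartesian_product)
  also have "\<dots> \<le> (\<Sum>j<m. 1)"
    using w2 by (intro sum_mono) auto
  finally have "real (Suc m) \<le> real m" using L by simp
  then show False by simp
qed



lemma dist_le_refl: "u \<in> V \<Longrightarrow> dist_le V E u u 0"
  unfolding dist_le_def is_path_def by (rule exI[of _ "[u]"]) auto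

lemma dist_le_mono: "dist_le V E u v n \<Longrightarrow> n \<le> k \<Longrightarrow> dist_le V E u v k"
  unfolding dist_le_def using le_trans by blast

lemma dist_le_step:
  assumes d: "dist_le V E u v n" and e: "E v w" and w: "w \<in> V"
  shows "dist_le V E u w (Suc n)"
proof -
  obtain p where p: "is_path V E p" "hd p = u" "last p = v" "length p - 1 \<le> n"
    using d unfolding dist_le_def by blast
  have pne: "p \<noteq> []" and pd: "distinct p" and pV: "set p \<subseteq> V"
    and pE: "\<And>i. Suc i < length p \<Longrightarrow> E (p ! i) (p ! Suc i)"
    using p(1) unfolding is_path_def by auto
  show ?thesis
  proof (cases "w \<in> set p")
    case True
    then obtain i where i: "i < length p" "p ! i = w" by (auto simp: in_set_conv_nth)
    define q where "q = take (Suc i) p"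
    have lq: "length q = Suc i" unfolding q_def using i by simp
    have "is_path V E q" unfolding is_path_def
    proof (intro conjI allI impI)
      show "q \<noteq> []" using lq by auto
      show "distinct q" unfolding q_def using pd by simp
      show "set q \<subseteq> V" unfolding q_def using pV set_take_subset by fast
      fix j assume "Suc j < length q"
      then show "E (q ! j) (q ! Suc j)" unfolding q_def using pE lq i by simp
    qed
    moreover have "hd q = u" unfolding q_def using p(2) by simp
    moreover have "last q = w"
    proof -
      have "q \<noteq> []" using lq by auto
      then have "last q = q ! i" using lq by (simp add: last_conv_nth)
      also have "\<dots> = p ! i" unfolding q_def by simp
      finally show ?thesis using i by simp
    qed
    moreover have "length q - 1 \<le> Suc n" using lq i p(4) by simp
    ultimately show ?thesis unfolding dist_le_def by blast
  next
    case False
    define q where "q = p @ [w]"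
    have "is_path V E q" unfolding is_path_def
    proof (intro conjI allI impI)
      show "q \<noteq> []" unfolding q_def by auto
      show "distinct q" unfolding q_def using pd False by simp
      show "set q \<subseteq> V" unfolding q_def using pV w by simp
      fix j assume j: "Suc j < length q"
      show "E (q ! j) (q ! Suc j)"
      proof (cases "Suc j < length p")
        case True then show ?thesis unfolding q_def using pE by (simp add: nth_append)
      next
        case False
        then have "j = length p - 1" "Suc j = length p" using j unfolding q_def by auto
        then show ?thesis unfolding q_def using e p(3) pne by (simp add: nth_append last_conv_nth)
      qed
    qed
    moreover have "hd q = u" unfolding q_def using p(2) pne by simp
    moreover have "last q = w" unfolding q_def by simp
    moreover have "length q - 1 \<le> Suc n" unfolding q_def using p(4) pne by simp
    ultimately show ?thesis unfolding dist_le_def by blast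
  qed
qed

lemma relpow_dist_le:
  assumes V: "\<And>x y. E x y \<Longrightarrow> y \<in> V"
  shows "(E ^^ n) u v \<Longrightarrow> u \<in> V \<Longrightarrow> dist_le V E u v n"
proof (induction n arbitrary: v)
  case 0
  then show ?case using dist_le_refl by simp
next
  case (Suc n)
  from Suc.prems(1) obtain y where y: "(E ^^ n) u y" "E y v" by (rule relpowp_Suc_E)
  then show ?case using Suc.IH Suc.prems(2) dist_le_step V by metis
qed

lemma generate_mono_sub: "h \<in> generate G A \<Longrightarrow> A \<subseteq> B \<Longrightarrow> h \<in> generate G B"
proof (induction h rule: generate.induct)
  case one then show ?case by (simp add: generate.one)
next
  case (incl h) then show ?case by (blast intro: generate.incl)
next
  case (inv h) then show ?case by (blast intro: generate.inv)
next
  case (eng h1 h2) then show ?case by (blast intro: generate.eng)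
qed

lemma cayley_step:
  assumes grp: "group G" and S: "S \<subseteq> carrier G" and x: "x \<in> carrier G" and s: "s \<in> S"
  shows "(cayley_adj G S)\<^sup>*\<^sup>* x (x \<otimes>\<^bsub>G\<^esub> s)"
proof (cases "x \<otimes>\<^bsub>G\<^esub> s = x")
  case True then show ?thesis by simp
next
  case False
  have "s \<in> carrier G" using S s by blast
  then have "x \<otimes>\<^bsub>G\<^esub> s \<in> carrier G" using x grp by (intro monoid.m_closed group.is_monoid)
  then have "cayley_adj G S x (x \<otimes>\<^bsub>G\<^esub> s)" unfolding cayley_adj_def using x s False by auto
  then show ?thesis by (rule r_into_rtranclp)
qed

lemma cayley_reach:
  assumes grp: "group G" and S: "S \<subseteq> carrier G" "\<forall>s\<in>S. inv\<^bsub>G\<^esub> s \<in> S"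
    and h: "h \<in> generate G S"
  shows "\<forall>x\<in>carrier G. (cayley_adj G S)\<^sup>*\<^sup>* x (x \<otimes>\<^bsub>G\<^esub> h)"
  using h
proof (induction h rule: generate.induct)
  case one
  show ?case
  proof
    fix x assume "x \<in> carrier G"
    then have "x \<otimes>\<^bsub>G\<^esub> \<one>\<^bsub>G\<^esub> = x" using grp by (intro monoid.r_one group.is_monoid)
    then show "(cayley_adj G S)\<^sup>*\<^sup>* x (x \<otimes>\<^bsub>G\<^esub> \<one>\<^bsub>G\<^esub>)" by simp
  qed
next
  case (incl h)
  then show ?case using cayley_step[OF grp S(1)] by blast
next
  case (inv h)
  then have "inv\<^bsub>G\<^esub> h \<in> S" using S(2) by blast
  then show ?case using cayley_step[OF grp S(1)] by blast
next
  case (eng h1 h2)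
  show ?case
  proof
    fix x assume x: "x \<in> carrier G"
    have h1c: "h1 \<in> carrier G" by (rule group.generate_in_carrier[OF grp S(1) eng.hyps(1)])
    have h2c: "h2 \<in> carrier G" by (rule group.generate_in_carrier[OF grp S(1) eng.hyps(2)])
    have x1: "x \<otimes>\<^bsub>G\<^esub> h1 \<in> carrier G" using x h1c grp by (intro monoid.m_closed group.is_monoid)
    have a: "(cayley_adj G S)\<^sup>*\<^sup>* x (x \<otimes>\<^bsub>G\<^esub> h1)" using eng.IH(1) x by blast
    have b: "(cayley_adj G S)\<^sup>*\<^sup>* (x \<otimes>\<^bsub>G\<^esub> h1) ((x \<otimes>\<^bsub>G\<^esub> h1) \<otimes>\<^bsub>G\<^esub> h2)" using eng.IH(2) x1 by blast
    have "(x \<otimes>\<^bsub>G\<^esub> h1) \<otimes>\<^bsub>G\<^esub> h2 = x \<otimes>\<^bsub>G\<^esub> (h1 \<otimes>\<^bsub>G\<^esub> h2)"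
      using x h1c h2c grp by (intro monoid.m_assoc group.is_monoid)
    then show "(cayley_adj G S)\<^sup>*\<^sup>* x (x \<otimes>\<^bsub>G\<^esub> (h1 \<otimes>\<^bsub>G\<^esub> h2))" using a b by simp
  qed
qed



lemma path_hits:
  assumes p: "is_path V (cayley_adj G S) p" and h: "hd p \<in> B" and l: "last p \<notin> B"
  shows "set p \<inter> rbd G S B \<noteq> {}"
proof -
  have pne: "p \<noteq> []" using p unfolding is_path_def by auto
  define j where "j = (LEAST j. p ! j \<notin> B)"
  have ex: "p ! (length p - 1) \<notin> B" using l pne by (simp add: last_conv_nth)
  have j1: "p ! j \<notin> B" unfolding j_def using ex by (rule LeastI)
  have j2: "j \<le> length p - 1" unfolding j_def using ex by (rule Least_le)
  have jl: "j < length p" using j2 pne by (cases p) auto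
  have "hd p = p ! 0" using pne by (simp add: hd_conv_nth)
  then have p0: "p ! 0 \<in> B" using h by simp
  have j0: "j \<noteq> 0"
  proof
    assume "j = 0"
    then show False using j1 p0 by simp
  qed
  have prev: "p ! (j - 1) \<in> B"
  proof (rule ccontr)
    assume "p ! (j - 1) \<notin> B"
    then have "j \<le> j - 1" unfolding j_def by (rule Least_le)
    then show False using j0 by simp
  qed
  have "Suc (j - 1) < length p" using jl j0 by simp
  then have "cayley_adj G S (p ! (j - 1)) (p ! Suc (j - 1))" using p unfolding is_path_def by blast
  then have "cayley_adj G S (p ! (j - 1)) (p ! j)" using j0 by simp
  then obtain s where "s \<in> S" "p ! j = p ! (j - 1) \<otimes>\<^bsub>G\<^esub> s" unfolding cayley_adj_def by blast
  then have "p ! j \<in> rbd G S B" unfolding rbd_def using prev j1 by blast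
  moreover have "p ! j \<in> set p" using jl by simp
  ultimately show ?thesis by blast
qed

theorem mainTheorem5:
  fixes G :: "('a, 'b) monoid_scheme"
  assumes "group G"
    and "finitely_generated_group G"
    and "infinite (carrier G)"
    and "amenable_group G"
  shows "extraterrestrial_group G"
proof -
  note grp = assms(1)
  have ic: "inv\<^bsub>G\<^esub> x \<in> carrier G" if "x \<in> carrier G" for x using grp that by (rule group.inv_closed)
  have ii: "inv\<^bsub>G\<^esub> (inv\<^bsub>G\<^esub> x) = x" if "x \<in> carrier G" for x using grp that by (rule group.inv_inv)
  from conjunct2[OF assms(4)[unfolded amenable_group_def]]
  obtain \<mu> :: "'a set \<Rightarrow> real" where mu: "\<mu> (carrier G) = 1 \<and>
        (\<forall>A. A \<subseteq> carrier G \<longrightarrow> \<mu> A \<ge> 0) \<and>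
        (\<forall>A B. A \<subseteq> carrier G \<longrightarrow> B \<subseteq> carrier G \<longrightarrow> A \<inter> B = {} \<longrightarrow>
               \<mu> (A \<union> B) = \<mu> A + \<mu> B) \<and>
        (\<forall>g A. g \<in> carrier G \<longrightarrow> A \<subseteq> carrier G \<longrightarrow> \<mu> (g <#\<^bsub>G\<^esub> A) = \<mu> A)" ..
  note mu1 = mu[THEN conjunct1]
  note mupos = mu[THEN conjunct2, THEN conjunct1]
  note muadd = mu[THEN conjunct2, THEN conjunct2, THEN conjunct1]
  note muinv = mu[THEN conjunct2, THEN conjunct2, THEN conjunct2]
  define \<nu> where "\<nu> A = \<mu> (m_inv G ` A)" for A
  have invsub: "m_inv G ` A \<subseteq> carrier G" if "A \<subseteq> carrier G" for A using ic that by blast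
  have "m_inv G ` carrier G = carrier G"
  proof
    show "m_inv G ` carrier G \<subseteq> carrier G" using invsub by blast
    show "carrier G \<subseteq> m_inv G ` carrier G"
    proof
      fix x assume "x \<in> carrier G"
      then have "x = inv\<^bsub>G\<^esub> (inv\<^bsub>G\<^esub> x)" "inv\<^bsub>G\<^esub> x \<in> carrier G" using ii ic by auto
      then show "x \<in> m_inv G ` carrier G" by blast
    qed
  qed
  then have n1: "\<nu> (carrier G) = 1" unfolding \<nu>_def using mu1 by simp
  have pos: "\<forall>A. A \<subseteq> carrier G \<longrightarrow> \<nu> A \<ge> 0"
  proof (intro allI impI)
    fix A assume "A \<subseteq> carrier G"
    then show "\<nu> A \<ge> 0" unfolding \<nu>_def by (rule mupos[rule_format, OF invsub])
  qed
  have add: "\<forall>A B. A \<subseteq> carrier G \<longrightarrow> B \<subseteq> carrier G \<longrightarrow> A \<inter> B = {} \<longrightarrow> \<nu> (A \<union> B) = \<nu> A + \<nu> B"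
  proof (intro allI impI)
    fix A B assume A: "A \<subseteq> carrier G" and B: "B \<subseteq> carrier G" and d: "A \<inter> B = {}"
    have "m_inv G ` A \<inter> m_inv G ` B = {}"
    proof (rule ccontr)
      assume "m_inv G ` A \<inter> m_inv G ` B \<noteq> {}"
      then obtain a b where ab: "a \<in> A" "b \<in> B" "inv\<^bsub>G\<^esub> a = inv\<^bsub>G\<^esub> b" by auto
      have "a \<in> carrier G" "b \<in> carrier G" using ab A B by auto
      then have "a = b" using ab(3) ii by metis
      then show False using ab d by blast
    qed
    then show "\<nu> (A \<union> B) = \<nu> A + \<nu> B" unfolding \<nu>_def image_Un
      by (rule muadd[rule_format, OF invsub[OF A] invsub[OF B]])
  qed
  have rinv: "\<forall>g A. g \<in> carrier G \<longrightarrow> A \<subseteq> carrier G \<longrightarrow> \<nu> (A #>\<^bsub>G\<^esub> g) = \<nu> A"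
  proof (intro allI impI)
    fix g A assume g: "g \<in> carrier G" and A: "A \<subseteq> carrier G"
    have "m_inv G ` (A #>\<^bsub>G\<^esub> g) = inv\<^bsub>G\<^esub> g <#\<^bsub>G\<^esub> (m_inv G ` A)"
    proof
      show "m_inv G ` (A #>\<^bsub>G\<^esub> g) \<subseteq> inv\<^bsub>G\<^esub> g <#\<^bsub>G\<^esub> (m_inv G ` A)"
        unfolding r_coset_def l_coset_def using A g group.inv_mult_group[OF grp] by auto
      show "inv\<^bsub>G\<^esub> g <#\<^bsub>G\<^esub> (m_inv G ` A) \<subseteq> m_inv G ` (A #>\<^bsub>G\<^esub> g)"
      proof
        fix y assume "y \<in> inv\<^bsub>G\<^esub> g <#\<^bsub>G\<^esub> (m_inv G ` A)"
        then obtain a where a: "a \<in> A" "y = inv\<^bsub>G\<^esub> g \<otimes>\<^bsub>G\<^esub> inv\<^bsub>G\<^esub> a"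
          unfolding l_coset_def by auto
        have "y = inv\<^bsub>G\<^esub> (a \<otimes>\<^bsub>G\<^esub> g)" using a A g group.inv_mult_group[OF grp] by auto
        moreover have "a \<otimes>\<^bsub>G\<^esub> g \<in> A #>\<^bsub>G\<^esub> g" unfolding r_coset_def using a by auto
        ultimately show "y \<in> m_inv G ` (A #>\<^bsub>G\<^esub> g)" by blast
      qed
    qed
    then show "\<nu> (A #>\<^bsub>G\<^esub> g) = \<nu> A" unfolding \<nu>_def
      using muinv[rule_format, OF ic[OF g] invsub[OF A]] by simp
  qed
  obtain S0 where S0: "finite S0" "S0 \<subseteq> carrier G" "generate G S0 = carrier G"
    using assms(2) unfolding finitely_generated_group_def by blast
  define S where "S = S0 \<union> m_inv G ` S0"
  have Sfin: "finite S" and Sc: "S \<subseteq> carrier G" unfolding S_def using S0 ic by auto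
  have Ssym: "\<forall>s\<in>S. inv\<^bsub>G\<^esub> s \<in> S"
  proof
    fix s assume "s \<in> S"
    then consider "s \<in> S0" | "\<exists>t\<in>S0. s = inv\<^bsub>G\<^esub> t" unfolding S_def by blast
    then show "inv\<^bsub>G\<^esub> s \<in> S"
    proof cases
      case 1 then show ?thesis unfolding S_def by blast
    next
      case 2
      then obtain t where "t \<in> S0" "s = inv\<^bsub>G\<^esub> t" by blast
      then have "inv\<^bsub>G\<^esub> s = t" using ii S0(2) by blast
      then show ?thesis using \<open>t \<in> S0\<close> unfolding S_def by blast
    qed
  qed
  have gen: "generate G S = carrier G"
  proof
    show "generate G S \<subseteq> carrier G" using group.generate_in_carrier[OF grp Sc] by blast
    show "carrier G \<subseteq> generate G S" using S0(3) generate_mono_sub[of _ G S0 S] unfolding S_def by blast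
  qed
  have fsg: "finite_symmetric_generating_set G S"
    unfolding finite_symmetric_generating_set_def using Sfin Sc Ssym gen by blast
  have "extraterrestrial (carrier G) (cayley_adj G S)"
    unfolding extraterrestrial_def
  proof
    fix m :: nat
    obtain B where B: "finite B" "B \<noteq> {}" "B \<subseteq> carrier G" "m * card (rbd G S B) \<le> card B"
      using folner[OF grp Sfin Sc n1 pos add rinv, of m] by blast
    define F where "F = rbd G S B"
    have "{b \<otimes>\<^bsub>G\<^esub> s | b s. b \<in> B \<and> s \<in> S} = (\<lambda>(b, s). b \<otimes>\<^bsub>G\<^esub> s) ` (B \<times> S)" by auto
    then have "finite {b \<otimes>\<^bsub>G\<^esub> s | b s. b \<in> B \<and> s \<in> S}" using B Sfin by simp
    then have Ffin: "finite F" unfolding F_def rbd_def by simp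
    have Fc: "F \<subseteq> carrier G" unfolding F_def rbd_def using B(3) Sc grp
      by (auto intro: monoid.m_closed group.is_monoid)
    have "infinite (carrier G - (B \<union> F))" using assms(3) B(1) Ffin by simp
    then obtain Ob where Ob: "finite Ob" "card Ob = card B" "Ob \<subseteq> carrier G - (B \<union> F)"
      using infinite_arbitrarily_large by blast
    obtain \<mu>0 where bij: "bij_betw \<mu>0 B Ob" using finite_same_card_bij[OF B(1) Ob(1)] Ob(2) by metis
    have reach: "\<exists>n. (cayley_adj G S ^^ n) u (\<mu>0 u)" if u: "u \<in> B" for u
    proof -
      have uc: "u \<in> carrier G" using u B by blast
      have vc: "\<mu>0 u \<in> carrier G" using bij u Ob(3) unfolding bij_betw_def by blast
      define h where "h = inv\<^bsub>G\<^esub> u \<otimes>\<^bsub>G\<^esub> \<mu>0 u"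
      have hc: "h \<in> carrier G" unfolding h_def using uc vc ic grp by (intro monoid.m_closed group.is_monoid) auto
      have "u \<otimes>\<^bsub>G\<^esub> h = \<mu>0 u" unfolding h_def using uc vc grp
        by (metis group.inv_closed group.is_monoid group.r_inv monoid.l_one monoid.m_assoc)
      moreover have "(cayley_adj G S)\<^sup>*\<^sup>* u (u \<otimes>\<^bsub>G\<^esub> h)"
        using cayley_reach[OF grp Sc Ssym, of h] hc gen uc by blast
      ultimately show ?thesis by (simp add: rtranclp_power)
    qed
    define nn where "nn u = (SOME n. (cayley_adj G S ^^ n) u (\<mu>0 u))" for u
    have nn: "(cayley_adj G S ^^ nn u) u (\<mu>0 u)" if "u \<in> B" for u
      unfolding nn_def using reach[OF that] by (rule someI_ex)
    define k where "k = Max (nn ` B)"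
    have dl: "dist_le (carrier G) (cayley_adj G S) u (\<mu>0 u) k" if u: "u \<in> B" for u
    proof -
      have "dist_le (carrier G) (cayley_adj G S) u (\<mu>0 u) (nn u)"
        using relpow_dist_le[of "cayley_adj G S" "carrier G"] nn[OF u] u B(3)
        unfolding cayley_adj_def by blast
      moreover have "nn u \<le> k" unfolding k_def using B(1) u by simp
      ultimately show ?thesis by (rule dist_le_mono)
    qed
    show "\<exists>k. \<forall>r. \<exists>U F Ob. is_UFO (carrier G) (cayley_adj G S) m k r U F Ob"
    proof (intro exI allI)
      fix r
      show "is_UFO (carrier G) (cayley_adj G S) m k r B F Ob"
        unfolding is_UFO_def
      proof (intro conjI)
        show "B \<subseteq> carrier G" "F \<subseteq> carrier G" "Ob \<subseteq> carrier G" "finite B" "finite F" "finite Ob"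
          using B Fc Ob Ffin by auto
        show "B \<inter> F = {}" unfolding F_def rbd_def by blast
        show "B \<inter> Ob = {}" "F \<inter> Ob = {}" using Ob by auto
        show "B \<noteq> {}" by (rule B(2))
        show "m * card F \<le> card B" unfolding F_def by (rule B(4))
        show "\<exists>\<mu>. bij_betw \<mu> B Ob \<and> (\<forall>u\<in>B. dist_le (carrier G) (cayley_adj G S) u (\<mu> u) k)"
          using bij dl by blast
        show "\<forall>p. is_path (carrier G) (cayley_adj G S) p \<and> hd p \<in> B \<and> last p \<in> Ob \<longrightarrow>
            set p \<inter> F \<noteq> {} \<or> r \<le> length p - 1"
        proof (intro allI impI)
          fix p assume p: "is_path (carrier G) (cayley_adj G S) p \<and> hd p \<in> B \<and> last p \<in> Ob"
          then have "last p \<notin> B" using Ob by blast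
          then have "set p \<inter> F \<noteq> {}" unfolding F_def using path_hits p by blast
          then show "set p \<inter> F \<noteq> {} \<or> r \<le> length p - 1" by blast
        qed
      qed
    qed
  qed
  then show ?thesis unfolding extraterrestrial_group_def using fsg by blast
qed


end
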